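(* Let $D$ and $D'=D+A$ be generalized connections on $E$, with $A\in \Gamma (E^*\otimes \mathfrak{so}(E))$, and let $D^S$ be an $E$-connection on $S$ compatible with $D$. Then: (i) The torsions $T'$ and $T$ of $D'$ and $D$ are related by $T'= T + \alpha$, where $\alpha \in \Gamma (\wedge^3E^* )$ is given by $\alpha (u,v,w) = \sum_{(u,v,w)\; \mathrm{cyclic}} \langle A_uv,w\rangle$. (ii) The $E$-connection $(D^S)' := D^S -\frac12 A$ is compatible with $D'$. Here $A$ is considered as a map $E\rightarrow \wedge^2E^*\cong \wedge ^2E\subset \mathrm{Cl}(E)$, so that $A_e$ acts by Clifford multiplication on $S$ for all $e\in E$. (iii) The Dirac operators $D\!\!\!\!/^{\,S}$ and $(D\!\!\!\!/^{\,S})'$ associated with $(D,D^S)$ and $(D',(D^S)')$ are related by $(D\!\!\!\!/^{\,S})' = D\!\!\!\!/^{\,S} - \frac14 \gamma_\alpha -\frac14 \gamma_{v_A}$, where $v_A = \mathrm{tr}_{\langle \cdot ,\cdot \rangle}A= \sum_i A_{e_i}\tilde{e}_i \in \Gamma (E)$. (iv) The operators $d\!\!\!/_{S}= D\!\!\!\!/^{\,S}+\frac{1}{4} \gamma_{T}$ and $d\!\!\!/^{\,\prime}_{S}= (D\!\!\!\!/^{\,S})' +\frac{1}{4} \gamma_{T'}$ are related by $d\!\!\!/^{\,\prime}_{S}= d\!\!\!/_{S} -\frac{1}{4} \gamma_{v_{A}}$.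
   Context: Let $E\to M$ be a regular Courant algebroid (anchor $\pi$ of constant rank, Dorfman bracket $[\cdot,\cdot]$) with scalar product $\langle\cdot,\cdot\rangle$ of neutral signature, and $S$ a bundle of irreducible $\mathrm{Cl}(E)$-modules (Clifford relation $e^2=\langle e,e\rangle$) with action $a\mapsto\gamma_a$. A generalized connection is an $\mathbb R$-linear $D:\Gamma(E)\to\Gamma(E^*\otimes E)$ with $D_e(fv)=\pi(e)(f)v+fD_ev$, compatible with $\langle\cdot,\cdot\rangle$; its torsion $T(u,v,w)=\langle D_uv-D_vu-[u,v]+(Du)^*v,w\rangle$ is a 3-form, identified with an element of $\wedge^3E\subset\mathrm{Cl}(E)$. $E$ is identified with $E^*$ via $\langle\cdot,\cdot\rangle$, and $\wedge^2E\subset\mathrm{End}\,E$ via $(e_1\wedge e_2)(e_3)=\langle e_1,e_3\rangle e_2-\langle e_2,e_3\rangle e_1$. An $E$-connection $D^S$ on $S$ is compatible with $D$ if $D^S_e(as)=(D_ea)s+aD^S_es$. The Dirac operator is $D\!\!\!\!/^{\,S}=\frac12\sum_i\tilde e_iD^S_{e_i}$, with $(e_i)$ a local frame of $E$ and $(\tilde e_i)$ the dual frame, $\langle e_i,\tilde e_j\rangle=\delta_{ij}$. *)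

theory Defs
  imports Main "HOL.Real_Vector_Spaces"
begin

text \<open>The type 'r plays the role of the
commutative real algebra of smooth functions on M, 'e the sections of E,
's the sections of the spinor bundle S.\<close>

definition module_ax :: "('r::comm_ring_1 \<Rightarrow> 'a::ab_group_add \<Rightarrow> 'a) \<Rightarrow> bool" where
  "module_ax sm \<longleftrightarrow>
     (\<forall>f x y. sm f (x + y) = sm f x + sm f y) \<and>
     (\<forall>f g x. sm (f + g) x = sm f x + sm g x) \<and>
     (\<forall>f g x. sm (f * g) x = sm f (sm g x)) \<and>
     (\<forall>x. sm 1 x = x)"

definition anchor_ax ::
  "('r::{comm_ring_1,real_algebra_1} \<Rightarrow> 'e::ab_group_add \<Rightarrow> 'e) \<Rightarrow> ('e \<Rightarrow> 'r \<Rightarrow> 'r) \<Rightarrow> bool" where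
  "anchor_ax smE anc \<longleftrightarrow>
     (\<forall>e f g. anc e (f * g) = anc e f * g + f * anc e g) \<and>
     (\<forall>e f g. anc e (f + g) = anc e f + anc e g) \<and>
     (\<forall>e c f. anc e (of_real c * f) = of_real c * anc e f) \<and>
     (\<forall>e1 e2 f. anc (e1 + e2) f = anc e1 f + anc e2 f) \<and>
     (\<forall>h e f. anc (smE h e) f = h * anc e f)"

definition scalar_product_ax ::
  "('r::comm_ring_1 \<Rightarrow> 'e::ab_group_add \<Rightarrow> 'e) \<Rightarrow> ('e \<Rightarrow> 'e \<Rightarrow> 'r) \<Rightarrow> bool" where
  "scalar_product_ax smE ip \<longleftrightarrow>
     (\<forall>u v. ip u v = ip v u) \<and>
     (\<forall>u1 u2 v. ip (u1 + u2) v = ip u1 v + ip u2 v) \<and>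
     (\<forall>f u v. ip (smE f u) v = f * ip u v) \<and>
     (\<forall>u. (\<forall>v. ip u v = 0) \<longrightarrow> u = 0)"

text \<open>Courant algebroid in terms of the Dorfman bracket.\<close>
definition courant_algebroid ::
  "('r::{comm_ring_1,real_algebra_1} \<Rightarrow> 'e::ab_group_add \<Rightarrow> 'e) \<Rightarrow> ('e \<Rightarrow> 'r \<Rightarrow> 'r)
   \<Rightarrow> ('e \<Rightarrow> 'e \<Rightarrow> 'r) \<Rightarrow> ('e \<Rightarrow> 'e \<Rightarrow> 'e) \<Rightarrow> bool" where
  "courant_algebroid smE anc ip br \<longleftrightarrow>
     module_ax smE \<and> anchor_ax smE anc \<and> scalar_product_ax smE ip \<and>
     (\<forall>u1 u2 v. br (u1 + u2) v = br u1 v + br u2 v) \<and>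
     (\<forall>u v1 v2. br u (v1 + v2) = br u v1 + br u v2) \<and>
     (\<forall>u f v. br u (smE f v) = smE (anc u f) v + smE f (br u v)) \<and>
     (\<forall>u v w. br u (br v w) = br (br u v) w + br v (br u w)) \<and>
     (\<forall>u v w. anc u (ip v w) = ip (br u v) w + ip v (br u w)) \<and>
     (\<forall>u w. ip (br u u) w = of_real (1/2) * anc w (ip u u))"

definition dual_system ::
  "('r::comm_ring_1 \<Rightarrow> 'e::ab_group_add \<Rightarrow> 'e) \<Rightarrow> ('e \<Rightarrow> 'e \<Rightarrow> 'r) \<Rightarrow> 'i set
   \<Rightarrow> ('i \<Rightarrow> 'e) \<Rightarrow> ('i \<Rightarrow> 'e) \<Rightarrow> bool" where
  "dual_system smE ip I fr dfr \<longleftrightarrow>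
     finite I \<and> (\<forall>x. x = (\<Sum>i\<in>I. smE (ip (fr i) x) (dfr i)))"

definition clifford_module ::
  "('r::comm_ring_1 \<Rightarrow> 'e::ab_group_add \<Rightarrow> 'e) \<Rightarrow> ('e \<Rightarrow> 'e \<Rightarrow> 'r)
   \<Rightarrow> ('r \<Rightarrow> 's::ab_group_add \<Rightarrow> 's) \<Rightarrow> ('e \<Rightarrow> 's \<Rightarrow> 's) \<Rightarrow> bool" where
  "clifford_module smE ip smS gam \<longleftrightarrow>
     module_ax smS \<and>
     (\<forall>e1 e2 s. gam (e1 + e2) s = gam e1 s + gam e2 s) \<and>
     (\<forall>e s1 s2. gam e (s1 + s2) = gam e s1 + gam e s2) \<and>
     (\<forall>f e s. gam (smE f e) s = smS f (gam e s)) \<and>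
     (\<forall>f e s. gam e (smS f s) = smS f (gam e s)) \<and>
     (\<forall>e s. gam e (gam e s) = smS (ip e e) s)"

definition gen_connection ::
  "('r::comm_ring_1 \<Rightarrow> 'e::ab_group_add \<Rightarrow> 'e) \<Rightarrow> ('e \<Rightarrow> 'r \<Rightarrow> 'r) \<Rightarrow> ('e \<Rightarrow> 'e \<Rightarrow> 'r)
   \<Rightarrow> ('e \<Rightarrow> 'e \<Rightarrow> 'e) \<Rightarrow> bool" where
  "gen_connection smE anc ip D \<longleftrightarrow>
     (\<forall>u1 u2 v. D (u1 + u2) v = D u1 v + D u2 v) \<and>
     (\<forall>f u v. D (smE f u) v = smE f (D u v)) \<and>
     (\<forall>u v1 v2. D u (v1 + v2) = D u v1 + D u v2) \<and>
     (\<forall>u f v. D u (smE f v) = smE (anc u f) v + smE f (D u v)) \<and>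
     (\<forall>u v w. anc u (ip v w) = ip (D u v) w + ip v (D u w))"

definition so_valued ::
  "('r::comm_ring_1 \<Rightarrow> 'e::ab_group_add \<Rightarrow> 'e) \<Rightarrow> ('e \<Rightarrow> 'e \<Rightarrow> 'r) \<Rightarrow> ('e \<Rightarrow> 'e \<Rightarrow> 'e) \<Rightarrow> bool" where
  "so_valued smE ip A \<longleftrightarrow>
     (\<forall>u1 u2 v. A (u1 + u2) v = A u1 v + A u2 v) \<and>
     (\<forall>f u v. A (smE f u) v = smE f (A u v)) \<and>
     (\<forall>u v1 v2. A u (v1 + v2) = A u v1 + A u v2) \<and>
     (\<forall>u f v. A u (smE f v) = smE f (A u v)) \<and>
     (\<forall>u v w. ip (A u v) w + ip v (A u w) = 0)"

definition E_connection ::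
  "('r::comm_ring_1 \<Rightarrow> 'e::ab_group_add \<Rightarrow> 'e) \<Rightarrow> ('e \<Rightarrow> 'r \<Rightarrow> 'r)
   \<Rightarrow> ('r \<Rightarrow> 's::ab_group_add \<Rightarrow> 's) \<Rightarrow> ('e \<Rightarrow> 's \<Rightarrow> 's) \<Rightarrow> bool" where
  "E_connection smE anc smS DS \<longleftrightarrow>
     (\<forall>e1 e2 s. DS (e1 + e2) s = DS e1 s + DS e2 s) \<and>
     (\<forall>f e s. DS (smE f e) s = smS f (DS e s)) \<and>
     (\<forall>e s1 s2. DS e (s1 + s2) = DS e s1 + DS e s2) \<and>
     (\<forall>e f s. DS e (smS f s) = smS (anc e f) s + smS f (DS e s))"

definition compatible ::
  "('e \<Rightarrow> 's \<Rightarrow> 's::ab_group_add) \<Rightarrow> ('e \<Rightarrow> 'e \<Rightarrow> 'e) \<Rightarrow> ('e \<Rightarrow> 's \<Rightarrow> 's) \<Rightarrow> bool" where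
  "compatible gam D DS \<longleftrightarrow>
     (\<forall>e a s. DS e (gam a s) = gam (D e a) s + gam a (DS e s))"

text \<open>Torsion T(u,v,w) = <D_u v - D_v u - [u,v] + (Du)^* v, w>,
  where <(Du)^* v, w> = <v, D_w u>.\<close>
definition torsion ::
  "('e::ab_group_add \<Rightarrow> 'e \<Rightarrow> 'r::comm_ring_1) \<Rightarrow> ('e \<Rightarrow> 'e \<Rightarrow> 'e) \<Rightarrow> ('e \<Rightarrow> 'e \<Rightarrow> 'e)
   \<Rightarrow> 'e \<Rightarrow> 'e \<Rightarrow> 'e \<Rightarrow> 'r" where
  "torsion ip br D u v w = ip (D u v - D v u - br u v) w + ip v (D w u)"

definition cyclic_form ::
  "('e \<Rightarrow> 'e \<Rightarrow> 'r::comm_ring_1) \<Rightarrow> ('e \<Rightarrow> 'e \<Rightarrow> 'e) \<Rightarrow> 'e \<Rightarrow> 'e \<Rightarrow> 'e \<Rightarrow> 'r" where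
  "cyclic_form ip A u v w = ip (A u v) w + ip (A v w) u + ip (A w u) v"

text \<open>Clifford action of a 3-form phi, identified with
  (1/6) sum phi(e_i,e_j,e_k) e~_i e~_j e~_k in wedge^3 E in Cl(E).\<close>
definition cl3 ::
  "('r::{comm_ring_1,real_algebra_1} \<Rightarrow> 's::ab_group_add \<Rightarrow> 's) \<Rightarrow> ('e \<Rightarrow> 's \<Rightarrow> 's) \<Rightarrow> 'i set
   \<Rightarrow> ('i \<Rightarrow> 'e) \<Rightarrow> ('i \<Rightarrow> 'e) \<Rightarrow> ('e \<Rightarrow> 'e \<Rightarrow> 'e \<Rightarrow> 'r) \<Rightarrow> 's \<Rightarrow> 's" where
  "cl3 smS gam I fr dfr phi s = smS (of_real (1/6))
     (\<Sum>i\<in>I. \<Sum>j\<in>I. \<Sum>k\<in>I.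
        smS (phi (fr i) (fr j) (fr k)) (gam (dfr i) (gam (dfr j) (gam (dfr k) s))))"

text \<open>Clifford action of a skew endomorphism B in so(E) = wedge^2 E, using
  (e1 wedge e2)(e3) = <e1,e3> e2 - <e2,e3> e1: B = (1/2) sum_i e~_i wedge B e_i,
  and e1 wedge e2 corresponds to (1/2)(e1 e2 - e2 e1) in Cl(E).\<close>
definition cl2 ::
  "('r::{comm_ring_1,real_algebra_1} \<Rightarrow> 's::ab_group_add \<Rightarrow> 's) \<Rightarrow> ('e \<Rightarrow> 's \<Rightarrow> 's) \<Rightarrow> 'i set
   \<Rightarrow> ('i \<Rightarrow> 'e) \<Rightarrow> ('i \<Rightarrow> 'e) \<Rightarrow> ('e \<Rightarrow> 'e) \<Rightarrow> 's \<Rightarrow> 's" where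
  "cl2 smS gam I fr dfr B s = smS (of_real (1/4))
     (\<Sum>i\<in>I. gam (dfr i) (gam (B (fr i)) s) - gam (B (fr i)) (gam (dfr i) s))"

definition dirac ::
  "('r::{comm_ring_1,real_algebra_1} \<Rightarrow> 's::ab_group_add \<Rightarrow> 's) \<Rightarrow> ('e \<Rightarrow> 's \<Rightarrow> 's) \<Rightarrow> 'i set
   \<Rightarrow> ('i \<Rightarrow> 'e) \<Rightarrow> ('i \<Rightarrow> 'e) \<Rightarrow> ('e \<Rightarrow> 's \<Rightarrow> 's) \<Rightarrow> 's \<Rightarrow> 's" where
  "dirac smS gam I fr dfr DS s = smS (of_real (1/2)) (\<Sum>i\<in>I. gam (dfr i) (DS (fr i) s))"

definition trace_A :: "'i set \<Rightarrow> ('i \<Rightarrow> 'e) \<Rightarrow> ('i \<Rightarrow> 'e) \<Rightarrow> ('e \<Rightarrow> 'e \<Rightarrow> 'e::ab_group_add) \<Rightarrow> 'e" where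
  "trace_A I fr dfr A = (\<Sum>i\<in>I. A (fr i) (dfr i))"

end

theory Submission
  imports Defs
begin

locale P8 =
  fixes smE :: "'r::{comm_ring_1,real_algebra_1} \<Rightarrow> 'e::ab_group_add \<Rightarrow> 'e"
    and anc :: "'e \<Rightarrow> 'r \<Rightarrow> 'r"
    and ip :: "'e \<Rightarrow> 'e \<Rightarrow> 'r"
    and br :: "'e \<Rightarrow> 'e \<Rightarrow> 'e"
    and smS :: "'r \<Rightarrow> 's::ab_group_add \<Rightarrow> 's"
    and gam :: "'e \<Rightarrow> 's \<Rightarrow> 's"
    and I :: "'i set" and fr dfr :: "'i \<Rightarrow> 'e"
    and D A :: "'e \<Rightarrow> 'e \<Rightarrow> 'e"
    and DS :: "'e \<Rightarrow> 's \<Rightarrow> 's"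
  assumes CA: "courant_algebroid smE anc ip br"
    and CM: "clifford_module smE ip smS gam"
    and DU: "dual_system smE ip I fr dfr"
    and GC: "gen_connection smE anc ip D"
    and SO: "so_valued smE ip A"
    and EC: "E_connection smE anc smS DS"
    and CO: "compatible gam D DS"
begin

lemma MAE: "module_ax smE" using CA unfolding courant_algebroid_def by blast
lemma SPA: "scalar_product_ax smE ip" using CA unfolding courant_algebroid_def by blast
lemma MAS: "module_ax smS" using CM unfolding clifford_module_def by blast
lemma fin: "finite I" using DU by (simp add: dual_system_def)
lemma F1: "x = (\<Sum>i\<in>I. smE (ip (fr i) x) (dfr i))" using DU by (simp add: dual_system_def)

lemma smE_addr: "smE f (x + y) = smE f x + smE f y"
  using MAE unfolding module_ax_def by blast
lemma smE_addl: "smE (f + g) x = smE f x + smE g x"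
  using MAE unfolding module_ax_def by blast
lemma ip_sym: "ip u v = ip v u"
  using SPA unfolding scalar_product_ax_def by blast
lemma ip_addl: "ip (u1 + u2) v = ip u1 v + ip u2 v"
  using SPA unfolding scalar_product_ax_def by blast
lemma ip_addr: "ip v (u1 + u2) = ip v u1 + ip v u2"
  using ip_addl ip_sym by metis
lemma ip_sml: "ip (smE f u) v = f * ip u v"
  using SPA unfolding scalar_product_ax_def by blast
lemma ip_smr: "ip v (smE f u) = f * ip v u"
  using ip_sml ip_sym by metis
lemma ip_nd: "(\<And>v. ip u v = 0) \<Longrightarrow> u = 0"
  using SPA unfolding scalar_product_ax_def by blast

lemma smS_addr: "smS f (x + y) = smS f x + smS f y"
  using MAS unfolding module_ax_def by blast
lemma smS_addl: "smS (f + g) x = smS f x + smS g x"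
  using MAS unfolding module_ax_def by blast
lemma smS_mult: "smS (f * g) x = smS f (smS g x)"
  using MAS unfolding module_ax_def by blast
lemma smS_one: "smS 1 x = x"
  using MAS unfolding module_ax_def by blast
lemma smS_comm: "smS f (smS g x) = smS g (smS f x)"
  by (metis smS_mult mult.commute)

lemma gam_addl: "gam (e1 + e2) s = gam e1 s + gam e2 s"
  using CM unfolding clifford_module_def by blast
lemma gam_addr: "gam e (s1 + s2) = gam e s1 + gam e s2"
  using CM unfolding clifford_module_def by blast
lemma gam_sml: "gam (smE f e) s = smS f (gam e s)"
  using CM unfolding clifford_module_def by blast
lemma gam_smr: "gam e (smS f s) = smS f (gam e s)"
  using CM unfolding clifford_module_def by blast
lemma gam_sq: "gam e (gam e s) = smS (ip e e) s"
  using CM unfolding clifford_module_def by blast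

lemma A_addl: "A (u1 + u2) v = A u1 v + A u2 v"
  using SO unfolding so_valued_def by blast
lemma A_sml: "A (smE f u) v = smE f (A u v)"
  using SO unfolding so_valued_def by blast
lemma A_addr: "A u (v1 + v2) = A u v1 + A u v2"
  using SO unfolding so_valued_def by blast
lemma A_smr: "A u (smE f v) = smE f (A u v)"
  using SO unfolding so_valued_def by blast
lemma A_skew: "ip (A u v) w = - ip v (A u w)"
  using SO by (simp add: so_valued_def eq_neg_iff_add_eq_0)

interpretation smEr: additive "smE f" by unfold_locales (rule smE_addr)
interpretation smEl: additive "\<lambda>f. smE f x" by unfold_locales (rule smE_addl)
interpretation ipl: additive "\<lambda>u. ip u v" by unfold_locales (rule ip_addl)
interpretation ipr: additive "\<lambda>u. ip v u" by unfold_locales (rule ip_addr)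
interpretation smSr: additive "smS f" by unfold_locales (rule smS_addr)
interpretation smSl: additive "\<lambda>f. smS f x" by unfold_locales (rule smS_addl)
interpretation gaml: additive "\<lambda>e. gam e s" by unfold_locales (rule gam_addl)
interpretation gamr: additive "gam e" by unfold_locales (rule gam_addr)
interpretation Al: additive "\<lambda>u. A u v" by unfold_locales (rule A_addl)
interpretation Ar: additive "A u" by unfold_locales (rule A_addr)

lemmas lin = smEr.zero smEr.minus smEr.diff smEr.sum smEl.zero smEl.minus smEl.diff smEl.sum
  ipl.zero ipl.minus ipl.diff ipl.sum ipr.zero ipr.minus ipr.diff ipr.sum
  smSr.zero smSr.minus smSr.diff smSr.sum smSl.zero smSl.minus smSl.diff smSl.sum
  gaml.zero gaml.minus gaml.diff gaml.sum gamr.zero gamr.minus gamr.diff gamr.sum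
  Al.zero Al.minus Al.diff Al.sum Ar.zero Ar.minus Ar.diff Ar.sum
  smE_addr smE_addl ip_addl ip_addr ip_sml ip_smr smS_addr smS_addl gam_addl gam_addr
  gam_sml gam_smr A_addl A_addr A_sml A_smr

lemma F2: "x = (\<Sum>i\<in>I. smE (ip (dfr i) x) (fr i))"
proof -
  have "(\<Sum>i\<in>I. smE (ip (dfr i) x) (fr i)) - x = 0"
  proof (rule ip_nd)
    fix v
    have "ip x v = ip x (\<Sum>i\<in>I. smE (ip (fr i) v) (dfr i))" using F1[of v] by simp
    also have "\<dots> = (\<Sum>i\<in>I. ip (fr i) v * ip x (dfr i))" by (simp add: lin)
    finally have "ip x v = (\<Sum>i\<in>I. ip (fr i) v * ip x (dfr i))" .
    moreover have "ip (\<Sum>i\<in>I. smE (ip (dfr i) x) (fr i)) v = (\<Sum>i\<in>I. ip (dfr i) x * ip (fr i) v)"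
      by (simp add: lin)
    ultimately show "ip ((\<Sum>i\<in>I. smE (ip (dfr i) x) (fr i)) - x) v = 0"
      by (simp add: lin ip_sym[of x] mult.commute)
  qed
  then show ?thesis by simp
qed

lemma AC: "gam x (gam y s) + gam y (gam x s) = smS (ip x y) s + smS (ip x y) s"
proof -
  have "gam (x+y) (gam (x+y) s) = smS (ip (x+y) (x+y)) s" by (rule gam_sq)
  then have "gam x (gam x s) + gam x (gam y s) + (gam y (gam x s) + gam y (gam y s))
      = smS (ip x x) s + smS (ip x y) s + (smS (ip x y) s + smS (ip y y) s)"
    by (simp only: gam_addl gam_addr ip_addl ip_addr smS_addl ip_sym[of y x] add.assoc) (simp only: add_ac)
  then show ?thesis by (simp add: gam_sq algebra_simps)
qed

lemma AC': "gam x (gam y s) = smS (ip x y) s + smS (ip x y) s - gam y (gam x s)"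
  using AC[of x y s] by (simp add: algebra_simps)

lemma half: "of_real (1/2) + of_real (1/2) = (1::'r)"
  by (simp add: of_real_add[symmetric])

lemma twice0: "(t::'r) + t = 0 \<Longrightarrow> t = 0"
proof -
  assume "t + t = 0"
  have "t = (of_real (1/2) + of_real (1/2)) * t" by (simp add: half)
  also have "\<dots> = of_real (1/2) * (t + t)" by (simp add: algebra_simps)
  finally show "t = 0" using \<open>t + t = 0\<close> by simp
qed

lemma tr0: "(\<Sum>j\<in>I. ip (A c (fr j)) (dfr j)) = 0"
proof -
  let ?t = "(\<Sum>j\<in>I. ip (A c (fr j)) (dfr j))"
  let ?t' = "(\<Sum>j\<in>I. ip (fr j) (A c (dfr j)))"
  have 1: "?t = - ?t'" by (simp add: A_skew sum_negf)
  have "?t' = (\<Sum>j\<in>I. ip (fr j) (\<Sum>k\<in>I. smE (ip (dfr k) (A c (dfr j))) (fr k)))"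
    using F2 by simp
  also have "\<dots> = (\<Sum>j\<in>I. \<Sum>k\<in>I. ip (dfr k) (A c (dfr j)) * ip (fr j) (fr k))"
    by (simp add: lin)
  also have "\<dots> = (\<Sum>k\<in>I. \<Sum>j\<in>I. ip (fr j) (fr k) * ip (dfr k) (A c (dfr j)))"
    by (subst sum.swap) (simp add: mult.commute)
  also have "\<dots> = (\<Sum>k\<in>I. ip (dfr k) (A c (\<Sum>j\<in>I. smE (ip (fr j) (fr k)) (dfr j))))"
    by (simp add: lin)
  also have "\<dots> = ?t"
    using F1 by (simp add: ip_sym)
  finally have "?t' = ?t" .
  with 1 have "?t + ?t = 0" by simp
  then show ?thesis by (rule twice0)
qed

lemma comb: "smS (of_real a) x + smS (of_real b) x = smS (of_real (a+b)) x"
  by (simp add: smS_addl of_real_add)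

lemma trS: "(\<Sum>j\<in>I. smS (ip (A c (fr j)) (dfr j)) t) = 0"
  by (subst smSl.sum[symmetric]) (simp add: tr0 lin)

lemma trS': "(\<Sum>j\<in>I. smS (ip (dfr j) (A c (fr j))) t) = 0"
  using trS by (simp add: ip_sym)

lemma G1: "(\<Sum>k\<in>I. smS (ip (fr k) x) (gam (dfr k) s)) = gam x s"
proof -
  have "gam x s = gam (\<Sum>k\<in>I. smE (ip (fr k) x) (dfr k)) s"
    by (rule arg_cong[where f="\<lambda>z. gam z s"], rule F1)
  also have "\<dots> = (\<Sum>k\<in>I. smS (ip (fr k) x) (gam (dfr k) s))" by (simp add: lin)
  finally show ?thesis by simp
qed

lemma G1': "(\<Sum>k\<in>I. smS (ip x (fr k)) (gam (dfr k) s)) = gam x s"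
  using G1 by (simp add: ip_sym)

lemma Gin: "(\<Sum>k\<in>I. smS (ip x (fr k)) (gam a (gam b (gam (dfr k) s)))) = gam a (gam b (gam x s))"
proof -
  have "gam a (gam b (gam x s)) = gam a (gam b (\<Sum>k\<in>I. smS (ip x (fr k)) (gam (dfr k) s)))"
    by (simp only: G1')
  also have "\<dots> = (\<Sum>k\<in>I. smS (ip x (fr k)) (gam a (gam b (gam (dfr k) s))))" by (simp add: lin)
  finally show ?thesis by simp
qed

lemma Gmid: "(\<Sum>k\<in>I. smS (ip x (fr k)) (gam a (gam (dfr k) s))) = gam a (gam x s)"
proof -
  have "gam a (gam x s) = gam a (\<Sum>k\<in>I. smS (ip x (fr k)) (gam (dfr k) s))"
    by (simp only: G1')
  also have "\<dots> = (\<Sum>k\<in>I. smS (ip x (fr k)) (gam a (gam (dfr k) s)))" by (simp add: lin)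
  finally show ?thesis by simp
qed

lemma G2A: "(\<Sum>i\<in>I. smS (ip (dfr i) x) (gam (A c (fr i)) t)) = gam (A c x) t"
proof -
  have "gam (A c x) t = gam (A c (\<Sum>i\<in>I. smE (ip (dfr i) x) (fr i))) t"
    by (rule arg_cong[where f="\<lambda>z. gam (A c z) t"], rule F2)
  also have "\<dots> = (\<Sum>i\<in>I. smS (ip (dfr i) x) (gam (A c (fr i)) t))" by (simp add: lin)
  finally show ?thesis by simp
qed

lemma key3:
  "(\<Sum>i\<in>I. gam (dfr i) (cl2 smS gam I fr dfr (A (fr i)) s))
     = cl3 smS gam I fr dfr (cyclic_form ip A) s + gam (trace_A I fr dfr A) s"
proof -
  define X where "X = (\<Sum>i\<in>I. \<Sum>j\<in>I. gam (dfr i) (gam (dfr j) (gam (A (fr i) (fr j)) s)))"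
  define Y where "Y = (\<Sum>i\<in>I. \<Sum>j\<in>I. gam (dfr i) (gam (A (fr i) (fr j)) (gam (dfr j) s)))"
  define Z where "Z = (\<Sum>i\<in>I. \<Sum>j\<in>I. gam (A (fr i) (fr j)) (gam (dfr i) (gam (dfr j) s)))"
  define W where "W = (\<Sum>i\<in>I. \<Sum>k\<in>I. gam (dfr i) (gam (A (fr k) (fr i)) (gam (dfr k) s)))"
  define W' where "W' = (\<Sum>i\<in>I. \<Sum>k\<in>I. gam (A (fr k) (fr i)) (gam (dfr i) (gam (dfr k) s)))"
  define V where "V = gam (trace_A I fr dfr A) s"
  have p1: "\<And>i j. gam (dfr i) (gam (A (fr i) (fr j)) (gam (dfr j) s)) =
     smS (ip (A (fr i) (fr j)) (dfr j)) (gam (dfr i) s) + smS (ip (A (fr i) (fr j)) (dfr j)) (gam (dfr i) s)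
     - gam (dfr i) (gam (dfr j) (gam (A (fr i) (fr j)) s))"
    by (subst AC') (simp add: lin)
  have Y: "Y = - X"
    unfolding Y_def X_def by (simp add: p1 sum.distrib sum_subtractf trS sum_negf)
  have p2: "\<And>i j. gam (A (fr i) (fr j)) (gam (dfr i) (gam (dfr j) s)) =
     smS (ip (A (fr i) (fr j)) (dfr i)) (gam (dfr j) s) + smS (ip (A (fr i) (fr j)) (dfr i)) (gam (dfr j) s)
     - gam (dfr i) (gam (A (fr i) (fr j)) (gam (dfr j) s))"
    by (subst AC') (simp add: lin)
  have p3: "\<And>i. (\<Sum>j\<in>I. smS (ip (A (fr i) (fr j)) (dfr i)) (gam (dfr j) s)) = - gam (A (fr i) (dfr i)) s"
    by (simp add: A_skew lin sum_negf G1)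
  have Z: "Z = X - (V + V)"
    unfolding Z_def V_def trace_A_def
    by (simp add: p2 sum.distrib sum_subtractf p3 sum_negf lin Y[unfolded Y_def X_def] X_def)
  have p4: "\<And>i k. gam (dfr i) (gam (A (fr k) (fr i)) (gam (dfr k) s)) =
     smS (ip (dfr i) (A (fr k) (fr i))) (gam (dfr k) s) + smS (ip (dfr i) (A (fr k) (fr i))) (gam (dfr k) s)
     - gam (A (fr k) (fr i)) (gam (dfr i) (gam (dfr k) s))"
    by (subst AC') (simp add: lin)
  have W1: "W = - W'"
    unfolding W_def W'_def
    by (subst sum.swap) (simp add: p4 sum.distrib sum_subtractf trS' sum_negf, subst sum.swap, rule refl)
  have p5: "\<And>i k. gam (A (fr k) (fr i)) (gam (dfr i) (gam (dfr k) s)) =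
     smS (ip (dfr i) (dfr k)) (gam (A (fr k) (fr i)) s) + smS (ip (dfr i) (dfr k)) (gam (A (fr k) (fr i)) s)
     - gam (A (fr k) (fr i)) (gam (dfr k) (gam (dfr i) s))"
    by (subst AC') (simp add: lin)
  have W2: "W' = V + V - Z"
  proof -
    have "W' = (\<Sum>k\<in>I. \<Sum>i\<in>I. gam (A (fr k) (fr i)) (gam (dfr i) (gam (dfr k) s)))"
      unfolding W'_def by (rule sum.swap)
    also have "\<dots> = V + V - Z"
      unfolding V_def trace_A_def Z_def
      by (simp add: p5 sum.distrib sum_subtractf G2A lin)
    finally show ?thesis .
  qed
  define f where "f = (\<lambda>i j k. gam (dfr i) (gam (dfr j) (gam (dfr k) s)))"
  define T1 where "T1 = (\<Sum>i\<in>I. \<Sum>j\<in>I. \<Sum>k\<in>I. smS (ip (A (fr i) (fr j)) (fr k)) (f i j k))"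
  define T2 where "T2 = (\<Sum>i\<in>I. \<Sum>j\<in>I. \<Sum>k\<in>I. smS (ip (A (fr j) (fr k)) (fr i)) (f i j k))"
  define T3 where "T3 = (\<Sum>i\<in>I. \<Sum>j\<in>I. \<Sum>k\<in>I. smS (ip (A (fr k) (fr i)) (fr j)) (f i j k))"
  have C: "cl3 smS gam I fr dfr (cyclic_form ip A) s = smS (of_real (1/6)) (T1 + T2 + T3)"
    unfolding cl3_def cyclic_form_def T1_def T2_def T3_def f_def by (simp add: smS_addl sum.distrib)
  have T1: "T1 = X" unfolding T1_def X_def f_def by (simp add: Gin)
  have T2: "T2 = Z"
  proof -
    have "T2 = (\<Sum>j\<in>I. \<Sum>i\<in>I. \<Sum>k\<in>I. smS (ip (A (fr j) (fr k)) (fr i)) (f i j k))"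
      unfolding T2_def by (rule sum.swap)
    also have "\<dots> = (\<Sum>j\<in>I. \<Sum>k\<in>I. \<Sum>i\<in>I. smS (ip (A (fr j) (fr k)) (fr i)) (f i j k))"
      by (rule sum.cong[OF refl], rule sum.swap)
    also have "\<dots> = Z" unfolding Z_def f_def by (simp add: G1')
    finally show ?thesis .
  qed
  have T3: "T3 = W"
  proof -
    have "T3 = (\<Sum>i\<in>I. \<Sum>k\<in>I. \<Sum>j\<in>I. smS (ip (A (fr k) (fr i)) (fr j)) (f i j k))"
      unfolding T3_def by (rule sum.cong[OF refl], rule sum.swap)
    also have "\<dots> = W" unfolding W_def f_def by (simp add: Gmid)
    finally show ?thesis .
  qed
  have L: "(\<Sum>i\<in>I. gam (dfr i) (cl2 smS gam I fr dfr (A (fr i)) s)) = smS (of_real (1/4)) (X - Y)"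
    unfolding cl2_def X_def Y_def by (simp add: lin sum_subtractf)
  have e1: "smS (of_real (1/6)) (X+X+X) = smS (of_real (1/2)) X"
    by (simp add: smS_addr comb)
  have e2: "smS (of_real (1/6)) (V+V+V+V+V+V) = V"
    by (simp add: smS_addr comb smS_one)
  have e3: "smS (of_real (1/4)) (X+X) = smS (of_real (1/2)) X"
    by (simp add: smS_addr comb)
  have "T1 + T2 + T3 = (X + X + X) - (V+V+V+V+V+V)"
    unfolding T1 T2 T3 W1 W2 Z by (simp add: algebra_simps)
  then have "smS (of_real (1/6)) (T1 + T2 + T3)
     = smS (of_real (1/6)) (X + X + X) - smS (of_real (1/6)) (V+V+V+V+V+V)"
    by (simp only: smSr.diff)
  then have "smS (of_real (1/6)) (T1 + T2 + T3) = smS (of_real (1/2)) X - V"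
    by (simp only: e1 e2)
  then show ?thesis using L C Y e3 V_def by (simp add: algebra_simps)
qed

lemma mover: "gam x (gam y (gam a s)) = gam a (gam x (gam y s))
   - smS (ip x a) (gam y s) - smS (ip x a) (gam y s) + smS (ip y a) (gam x s) + smS (ip y a) (gam x s)"
proof -
  have "gam x (gam y (gam a s)) = gam x (smS (ip y a) s + smS (ip y a) s - gam a (gam y s))"
    by (subst AC'[of y a], rule refl)
  also have "\<dots> = smS (ip y a) (gam x s) + smS (ip y a) (gam x s) - gam x (gam a (gam y s))"
    by (simp add: lin)
  also have "gam x (gam a (gam y s)) = smS (ip x a) (gam y s) + smS (ip x a) (gam y s) - gam a (gam x (gam y s))"
    by (rule AC')
  finally show ?thesis by (simp add: algebra_simps)
qed

lemma S1: "(\<Sum>j\<in>I. smS (ip (A c (fr j)) a) (gam (dfr j) s)) = - gam (A c a) s"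
  by (simp add: A_skew lin sum_negf G1)

lemma S2: "(\<Sum>j\<in>I. smS (ip (dfr j) a) (gam (A c (fr j)) s)) = gam (A c a) s"
  by (rule G2A)

lemma comm2: "cl2 smS gam I fr dfr (A c) (gam a s) - gam a (cl2 smS gam I fr dfr (A c) s)
   = - (gam (A c a) s + gam (A c a) s)"
proof -
  define q where "q = smS (of_real (1/4))"
  define g where "g = gam (A c a) s"
  define s1 where "s1 = (\<lambda>j. smS (ip (A c (fr j)) a) (gam (dfr j) s))"
  define s2 where "s2 = (\<lambda>j. smS (ip (dfr j) a) (gam (A c (fr j)) s))"
  have "cl2 smS gam I fr dfr (A c) (gam a s) - gam a (cl2 smS gam I fr dfr (A c) s)
     = q (\<Sum>j\<in>I. (gam (dfr j) (gam (A c (fr j)) (gam a s)) - gam (A c (fr j)) (gam (dfr j) (gam a s)))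
         - (gam a (gam (dfr j) (gam (A c (fr j)) s)) - gam a (gam (A c (fr j)) (gam (dfr j) s))))"
    unfolding cl2_def q_def by (simp add: lin sum_subtractf sum.distrib algebra_simps)
  also have "\<dots> = q (\<Sum>j\<in>I. (s1 j + s1 j + s1 j + s1 j) - (s2 j + s2 j + s2 j + s2 j))"
    unfolding s1_def s2_def
    by (rule arg_cong[where f=q], rule sum.cong[OF refl],
        simp only: mover[of "dfr _" "A c (fr _)"] mover[of "A c (fr _)" "dfr _"], simp add: algebra_simps)
  also have "\<dots> = q (- ((g+g+g+g) + (g+g+g+g)))"
    unfolding s1_def s2_def g_def by (simp add: sum.distrib sum_subtractf S1 S2 algebra_simps)
  also have "\<dots> = - (q (g+g+g+g) + q (g+g+g+g))"
    by (simp only: smSr.minus smSr.add q_def)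
  also have "q (g+g+g+g) = g"
    unfolding q_def by (simp add: smS_addr comb smS_one)
  finally show ?thesis unfolding g_def .
qed

lemma DS_addl: "DS (e1 + e2) s = DS e1 s + DS e2 s" using EC unfolding E_connection_def by blast
lemma DS_sml: "DS (smE f e) s = smS f (DS e s)" using EC unfolding E_connection_def by blast
lemma DS_addr: "DS e (s1 + s2) = DS e s1 + DS e s2" using EC unfolding E_connection_def by blast
lemma DS_leib: "DS e (smS f s) = smS (anc e f) s + smS f (DS e s)" using EC unfolding E_connection_def by blast
lemma compat: "DS e (gam a s) = gam (D e a) s + gam a (DS e s)" using CO unfolding compatible_def by blast

lemma tor: "torsion ip br (\<lambda>u v. D u v + A u v) u v w = torsion ip br D u v w + cyclic_form ip A u v w"
proof -
  have 1: "ip (A v u) w = - ip (A v w) u" using A_skew[of v u w] ip_sym[of u] by simp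
  have 2: "ip v (A w u) = ip (A w u) v" by (rule ip_sym)
  show ?thesis unfolding torsion_def cyclic_form_def
    by (simp add: lin 1 2 algebra_simps)
qed

lemma cl2_addB: "cl2 smS gam I fr dfr (A (e1 + e2)) s = cl2 smS gam I fr dfr (A e1) s + cl2 smS gam I fr dfr (A e2) s"
  unfolding cl2_def by (simp add: lin sum_subtractf sum.distrib algebra_simps)
lemma cl2_smB: "cl2 smS gam I fr dfr (A (smE f e)) s = smS f (cl2 smS gam I fr dfr (A e) s)"
  unfolding cl2_def by (simp add: lin sum_subtractf sum.distrib algebra_simps smS_comm)
lemma cl2_adds: "cl2 smS gam I fr dfr (A e) (s1 + s2) = cl2 smS gam I fr dfr (A e) s1 + cl2 smS gam I fr dfr (A e) s2"
  unfolding cl2_def by (simp add: lin sum_subtractf sum.distrib algebra_simps)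
lemma cl2_sms: "cl2 smS gam I fr dfr (A e) (smS f s) = smS f (cl2 smS gam I fr dfr (A e) s)"
  unfolding cl2_def by (simp add: lin sum_subtractf sum.distrib algebra_simps smS_comm)

lemma EC': "E_connection smE anc smS (\<lambda>e s. DS e s - smS (of_real (1/2)) (cl2 smS gam I fr dfr (A e) s))"
  unfolding E_connection_def
  by (simp add: DS_addl DS_sml DS_addr DS_leib cl2_addB cl2_smB cl2_adds cl2_sms lin smS_comm algebra_simps)

lemma hh: "smS (of_real (1/2)) (g + g) = g"
  by (simp add: smS_addr comb smS_one)

lemma CO': "compatible gam (\<lambda>u v. D u v + A u v) (\<lambda>e s. DS e s - smS (of_real (1/2)) (cl2 smS gam I fr dfr (A e) s))"
  unfolding compatible_def
proof (intro allI)
  fix e a s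
  let ?h = "smS (of_real (1/2))"
  let ?g = "gam (A e a) s"
  have c: "cl2 smS gam I fr dfr (A e) (gam a s) = gam a (cl2 smS gam I fr dfr (A e) s) - (?g + ?g)"
    using comm2[of e a s] by (simp add: algebra_simps)
  have "?h (cl2 smS gam I fr dfr (A e) (gam a s)) = gam a (?h (cl2 smS gam I fr dfr (A e) s)) - ?g"
    unfolding c by (simp only: smSr.diff hh gam_smr)
  then show "DS e (gam a s) - ?h (cl2 smS gam I fr dfr (A e) (gam a s)) =
         gam (D e a + A e a) s + gam a (DS e s - ?h (cl2 smS gam I fr dfr (A e) s))"
    by (simp add: compat lin algebra_simps)
qed

lemma quarter: "smS (of_real (1/2)) (smS (of_real (1/2)) x) = smS (of_real (1/4)) x"
  by (simp add: smS_mult[symmetric] of_real_mult[symmetric])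

lemma dirac': "dirac smS gam I fr dfr (\<lambda>e s. DS e s - smS (of_real (1/2)) (cl2 smS gam I fr dfr (A e) s)) s
   = dirac smS gam I fr dfr DS s - smS (of_real (1/4)) (cl3 smS gam I fr dfr (cyclic_form ip A) s)
     - smS (of_real (1/4)) (gam (trace_A I fr dfr A) s)"
proof -
  let ?h = "smS (of_real (1/2))"
  have "(\<Sum>i\<in>I. gam (dfr i) (DS (fr i) s - ?h (cl2 smS gam I fr dfr (A (fr i)) s)))
     = (\<Sum>i\<in>I. gam (dfr i) (DS (fr i) s)) - ?h (\<Sum>i\<in>I. gam (dfr i) (cl2 smS gam I fr dfr (A (fr i)) s))"
    by (simp add: lin sum_subtractf)
  then show ?thesis unfolding dirac_def
    by (simp only: smSr.diff quarter key3 smSr.add diff_diff_eq)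
qed

lemma cl3_add: "cl3 smS gam I fr dfr (\<lambda>u v w. p u v w + q u v w) s
   = cl3 smS gam I fr dfr p s + cl3 smS gam I fr dfr q s"
  unfolding cl3_def by (simp add: smS_addl sum.distrib smS_addr)

end

theorem proposition8p1:
  fixes smE :: "'r::{comm_ring_1,real_algebra_1} \<Rightarrow> 'e::ab_group_add \<Rightarrow> 'e"
    and anc :: "'e \<Rightarrow> 'r \<Rightarrow> 'r"
    and ip :: "'e \<Rightarrow> 'e \<Rightarrow> 'r"
    and br :: "'e \<Rightarrow> 'e \<Rightarrow> 'e"
    and smS :: "'r \<Rightarrow> 's::ab_group_add \<Rightarrow> 's"
    and gam :: "'e \<Rightarrow> 's \<Rightarrow> 's"
    and I :: "'i set" and fr dfr :: "'i \<Rightarrow> 'e"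
    and D A :: "'e \<Rightarrow> 'e \<Rightarrow> 'e"
    and DS :: "'e \<Rightarrow> 's \<Rightarrow> 's"
  assumes "courant_algebroid smE anc ip br"
    and "clifford_module smE ip smS gam"
    and "dual_system smE ip I fr dfr"
    and "gen_connection smE anc ip D"
    and "so_valued smE ip A"
    and "E_connection smE anc smS DS"
    and "compatible gam D DS"
  defines "D' \<equiv> (\<lambda>u v. D u v + A u v)"
    and "DS' \<equiv> (\<lambda>e s. DS e s - smS (of_real (1/2)) (cl2 smS gam I fr dfr (A e) s))"
    and "\<alpha> \<equiv> cyclic_form ip A"
    and "vA \<equiv> trace_A I fr dfr A"
  shows "(\<forall>u v w. torsion ip br D' u v w = torsion ip br D u v w + \<alpha> u v w)
    \<and> (E_connection smE anc smS DS' \<and> compatible gam D' DS')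
    \<and> (\<forall>s. dirac smS gam I fr dfr DS' s
           = dirac smS gam I fr dfr DS s - smS (of_real (1/4)) (cl3 smS gam I fr dfr \<alpha> s)
             - smS (of_real (1/4)) (gam vA s))
    \<and> (\<forall>s. dirac smS gam I fr dfr DS' s + smS (of_real (1/4)) (cl3 smS gam I fr dfr (torsion ip br D') s)
           = (dirac smS gam I fr dfr DS s + smS (of_real (1/4)) (cl3 smS gam I fr dfr (torsion ip br D) s))
             - smS (of_real (1/4)) (gam vA s))"
proof -
  interpret P8 smE anc ip br smS gam I fr dfr D A DS
    by (unfold_locales; fact)
  have T: "\<And>u v w. torsion ip br D' u v w = torsion ip br D u v w + \<alpha> u v w"
    unfolding D'_def \<alpha>_def by (rule tor)
  have T': "torsion ip br D' = (\<lambda>u v w. torsion ip br D u v w + \<alpha> u v w)"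
    using T by (intro ext) simp
  have iii: "\<And>s. dirac smS gam I fr dfr DS' s
           = dirac smS gam I fr dfr DS s - smS (of_real (1/4)) (cl3 smS gam I fr dfr \<alpha> s)
             - smS (of_real (1/4)) (gam vA s)"
    unfolding DS'_def \<alpha>_def vA_def by (rule dirac')
  show ?thesis
  proof (intro conjI allI)
    show "E_connection smE anc smS DS'" unfolding DS'_def by (rule EC')
    show "compatible gam D' DS'" unfolding DS'_def D'_def by (rule CO')
  next
    fix u v w show "torsion ip br D' u v w = torsion ip br D u v w + \<alpha> u v w" by (rule T)
  next
    fix s show "dirac smS gam I fr dfr DS' s
           = dirac smS gam I fr dfr DS s - smS (of_real (1/4)) (cl3 smS gam I fr dfr \<alpha> s)
             - smS (of_real (1/4)) (gam vA s)" by (rule iii)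
  next
    fix s show "dirac smS gam I fr dfr DS' s + smS (of_real (1/4)) (cl3 smS gam I fr dfr (torsion ip br D') s)
           = (dirac smS gam I fr dfr DS s + smS (of_real (1/4)) (cl3 smS gam I fr dfr (torsion ip br D) s))
             - smS (of_real (1/4)) (gam vA s)"
      unfolding T' cl3_add iii by (simp add: lin algebra_simps)
  qed
qed

end
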